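(* Let $\Gamma$ be the graph with vertex set $\{v_{n,k}: n\in\mathbb Z,\ k\in\mathbb Z/10\mathbb Z\}$ and edge set $\{v_{n,k}v_{n,k+1}: n\in\mathbb Z, k\in\mathbb Z/10\mathbb Z\}\cup\{v_{n,2k+1}v_{n+1,4k+2}: n\in\mathbb Z, k\in\mathbb Z/10\mathbb Z\}$. Then $\Gamma$ is a cubic (3-regular), 2-ended, vertex-transitive graph which is not a Cayley graph (i.e. no subgroup of $\mathrm{Aut}(\Gamma)$ acts regularly on $V(\Gamma)$). In particular, there exists a cubic 2-ended vertex-transitive graph which is not a Cayley graph.
   Context: Indices $k$ are taken modulo 10. A graph is 2-ended if it has exactly two ends (equivalently here, it is quasi-isometric to $\mathbb Z$). *)

theory Defs
  imports Main "HOL-Library.Numeral_Type"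
begin

definition simple_graph :: "('a \<Rightarrow> 'a \<Rightarrow> bool) \<Rightarrow> bool" where
  "simple_graph E \<longleftrightarrow> (\<forall>x y. E x y \<longrightarrow> E y x) \<and> (\<forall>x. \<not> E x x)"

definition cubic :: "('a \<Rightarrow> 'a \<Rightarrow> bool) \<Rightarrow> bool" where
  "cubic E \<longleftrightarrow> (\<forall>v. card {w. E v w} = 3)"

definition graph_connected :: "('a \<Rightarrow> 'a \<Rightarrow> bool) \<Rightarrow> bool" where
  "graph_connected E \<longleftrightarrow> (\<forall>u v. E\<^sup>*\<^sup>* u v)"

definition comps_minus :: "('a \<Rightarrow> 'a \<Rightarrow> bool) \<Rightarrow> 'a set \<Rightarrow> 'a set set" where
  "comps_minus E S =
     {{v. (\<lambda>x y. E x y \<and> x \<notin> S \<and> y \<notin> S)\<^sup>*\<^sup>* u v} | u. u \<notin> S}"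

definition inf_comps_minus :: "('a \<Rightarrow> 'a \<Rightarrow> bool) \<Rightarrow> 'a set \<Rightarrow> 'a set set" where
  "inf_comps_minus E S = {C \<in> comps_minus E S. infinite C}"

text \<open>A connected locally finite graph has exactly two ends iff removing a finite set of
vertices never leaves more than two infinite components, and some finite set leaves exactly two.\<close>
definition two_ended :: "('a \<Rightarrow> 'a \<Rightarrow> bool) \<Rightarrow> bool" where
  "two_ended E \<longleftrightarrow> graph_connected E \<and>
     (\<forall>S. finite S \<longrightarrow> finite (inf_comps_minus E S) \<and> card (inf_comps_minus E S) \<le> 2) \<and>
     (\<exists>S. finite S \<and> card (inf_comps_minus E S) = 2)"

definition graph_aut :: "('a \<Rightarrow> 'a \<Rightarrow> bool) \<Rightarrow> ('a \<Rightarrow> 'a) \<Rightarrow> bool" where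
  "graph_aut E f \<longleftrightarrow> bij f \<and> (\<forall>x y. E (f x) (f y) \<longleftrightarrow> E x y)"

definition vertex_transitive :: "('a \<Rightarrow> 'a \<Rightarrow> bool) \<Rightarrow> bool" where
  "vertex_transitive E \<longleftrightarrow> (\<forall>u v. \<exists>f. graph_aut E f \<and> f u = v)"

definition aut_subgroup :: "('a \<Rightarrow> 'a \<Rightarrow> bool) \<Rightarrow> ('a \<Rightarrow> 'a) set \<Rightarrow> bool" where
  "aut_subgroup E H \<longleftrightarrow> (\<forall>h\<in>H. graph_aut E h) \<and> id \<in> H \<and>
     (\<forall>g\<in>H. \<forall>h\<in>H. g \<circ> h \<in> H) \<and> (\<forall>h\<in>H. inv h \<in> H)"

definition acts_regularly :: "('a \<Rightarrow> 'a) set \<Rightarrow> bool" where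
  "acts_regularly H \<longleftrightarrow> (\<forall>u v. \<exists>!h. h \<in> H \<and> h u = v)"

definition cayley_graph :: "('a \<Rightarrow> 'a \<Rightarrow> bool) \<Rightarrow> bool" where
  "cayley_graph E \<longleftrightarrow> (\<exists>H. aut_subgroup E H \<and> acts_regularly H)"

text \<open>The graph Gamma: vertex (n,k) is v_{n,k}, with k in Z/10Z.\<close>
definition Gamma :: "int \<times> 10 \<Rightarrow> int \<times> 10 \<Rightarrow> bool" where
  "Gamma x y \<longleftrightarrow>
     (fst y = fst x \<and> (snd y = snd x + 1 \<or> snd x = snd y + 1)) \<or>
     (\<exists>k::10. (fst y = fst x + 1 \<and> snd x = 2*k+1 \<and> snd y = 4*k+2) \<or>
              (fst x = fst y + 1 \<and> snd y = 2*k+1 \<and> snd x = 4*k+2))"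

end

theory Submission
  imports Defs
begin


lemma all10: "(\<forall>x::10. P x) \<longleftrightarrow> P 0 \<and> P 1 \<and> P 2 \<and> P 3 \<and> P 4 \<and> P 5 \<and> P 6 \<and> P 7 \<and> P 8 \<and> P 9"
proof
  assume h: "P 0 \<and> P 1 \<and> P 2 \<and> P 3 \<and> P 4 \<and> P 5 \<and> P 6 \<and> P 7 \<and> P 8 \<and> P 9"
  show "\<forall>x. P x"
  proof
    fix x :: 10
    obtain z where z: "x = of_int z" "0 \<le> z" "z < 10" by (cases x) auto
    have "z = 0 \<or> z = 1 \<or> z = 2 \<or> z = 3 \<or> z = 4 \<or> z = 5 \<or> z = 6 \<or> z = 7 \<or> z = 8 \<or> z = 9" using z(2,3) by presburger
    then show "P x" using h z(1) by auto
  qed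
qed auto

lemma ex10: "(\<exists>x::10. P x) \<longleftrightarrow> P 0 \<or> P 1 \<or> P 2 \<or> P 3 \<or> P 4 \<or> P 5 \<or> P 6 \<or> P 7 \<or> P 8 \<or> P 9"
  using all10[of "\<lambda>x. \<not> P x"] by blast

definition odd10 :: "10 \<Rightarrow> bool" where
  "odd10 k \<longleftrightarrow> k = 1 \<or> k = 3 \<or> k = 5 \<or> k = 7 \<or> k = 9"

definition rung :: "int \<times> 10 \<Rightarrow> int \<times> 10" where
  "rung x = (if odd10 (snd x) then (fst x + 1, 2 * snd x) else (fst x - 1, 3 * snd x + 5))"


lemma Gamma_iff0: "\<forall>k k'::10. Gamma (n,k) (n',k') \<longleftrightarrow> (n',k') = (n, k + 1) \<or> (n',k') = (n, k - 1) \<or> (n',k') = rung (n,k)"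
  unfolding all10
  apply (simp add: Gamma_def rung_def odd10_def ex10)
  by arith

lemma Gamma_iff: "Gamma x y \<longleftrightarrow> y = (fst x, snd x + 1) \<or> y = (fst x, snd x - 1) \<or> y = rung x"
  using Gamma_iff0[of "fst x" "fst y"] by (cases x; cases y) auto


lemma Gamma_iff2: "Gamma (n,j) (n',j') \<longleftrightarrow> (n' = n \<and> (j' = j+1 \<or> j' = j-1)) \<or>
   (n' = n+1 \<and> odd10 j \<and> j' = 2*j) \<or> (n' = n-1 \<and> \<not> odd10 j \<and> j' = 3*j+5)"
  by (auto simp: Gamma_iff rung_def)

definition cT :: "10 \<Rightarrow> int \<Rightarrow> 10" where "cT s n = s * 2^(nat (n mod 4))"

lemma cT_succ: "2 * cT s (n+1) = 2 * (2 * cT s n)"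
proof -
  have "n mod 4 = 0 \<and> (n+1) mod 4 = 1 \<or> n mod 4 = 1 \<and> (n+1) mod 4 = 2 \<or> n mod 4 = 2 \<and> (n+1) mod 4 = 3 \<or> n mod 4 = 3 \<and> (n+1) mod 4 = 0" by presburger
  moreover have "\<forall>s::10. 2 * (s * 1) = 2 * (2 * (s * 8))" by (simp add: all10)
  ultimately show ?thesis unfolding cT_def
    by (elim disjE conjE) (simp_all add: algebra_simps)
qed

lemma G_same: "Gamma (n,j) (n,j') \<longleftrightarrow> (j' = j+1 \<or> j' = j-1)"
  by (simp add: Gamma_iff2)
lemma G_up: "n' = n + 1 \<Longrightarrow> Gamma (n,j) (n',j') \<longleftrightarrow> (odd10 j \<and> j' = 2*j)"
  by (simp add: Gamma_iff2)
lemma G_down: "n' = n - 1 \<Longrightarrow> Gamma (n,j) (n',j') \<longleftrightarrow> (\<not> odd10 j \<and> j' = 3*j+5)"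
  by (simp add: Gamma_iff2)
lemma G_far: "n' \<noteq> n \<Longrightarrow> n' \<noteq> n + 1 \<Longrightarrow> n' \<noteq> n - 1 \<Longrightarrow> \<not> Gamma (n,j) (n',j')"
  by (simp add: Gamma_iff2)

definition T :: "int \<Rightarrow> 10 \<Rightarrow> int \<times> 10 \<Rightarrow> int \<times> 10" where
  "T m s x = (fst x + m, snd x + 2 * cT s (fst x))"

lemma odd10_shift: "\<forall>j t::10. odd10 (j + 2*t) \<longleftrightarrow> odd10 j"
  unfolding all10 by (simp add: odd10_def)

lemma core_T1: "(odd10 (j + 2*t) \<and> j' + 2*(2*t) = 2*(j+2*t)) \<longleftrightarrow> (odd10 j \<and> j' = 2*(j::10))"
  using odd10_shift by (auto simp: algebra_simps)

lemma ten0: "(10::10) = 0" by simp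

lemma core_T2: "(\<not> odd10 (j + 2*(2*t)) \<and> j' + 2*t = 3*(j+2*(2*t))+5) \<longleftrightarrow> (\<not> odd10 j \<and> j' = 3*(j::10)+5)"
proof -
  have "3*(j+2*(2*t))+5 - 2*t = 3*j + 5 + 10 * t" by (simp add: algebra_simps)
  then have "3*(j+2*(2*t))+5 - 2*t = 3*j + 5" by (simp only: ten0 mult_zero_left add_0_right)
  then have "j' + 2*t = 3*(j+2*(2*t))+5 \<longleftrightarrow> j' = 3*j+5" by (metis add_diff_cancel diff_add_cancel)
  then show ?thesis using odd10_shift by (metis mult_2)
qed

lemma T_edge: "Gamma (T m s x) (T m s y) \<longleftrightarrow> Gamma x y"
proof -
  obtain n j n' j' where x: "x = (n,j)" and y: "y = (n',j')" by (cases x, cases y)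
  consider "n' = n" | "n' = n+1" | "n' = n - 1" | "n' \<noteq> n \<and> n' \<noteq> n+1 \<and> n' \<noteq> n-1" by blast
  then show ?thesis
  proof cases
    case 1 then show ?thesis by (simp add: x y T_def G_same)
  next
    case 2
    have a: "T m s x = (n+m, j + 2 * cT s n)" "T m s y = (n+m+1, j' + 2*(2* cT s n))"
      using 2 by (simp_all add: x y T_def cT_succ)
    show ?thesis unfolding a unfolding x y using 2 core_T1[of j "cT s n" j'] by (simp add: G_up)
  next
    case 3
    then have n: "n = n' + 1" by simp
    have a: "T m s x = (n'+m+1, j + 2 * (2 * cT s n'))" "T m s y = (n'+m, j' + 2* cT s n')"
      using n by (simp_all add: x y T_def cT_succ)
    show ?thesis unfolding a unfolding x y using 3 core_T2[of j "cT s n'" j'] by (simp add: G_down)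
  next
    case 4 then show ?thesis by (auto simp: x y T_def Gamma_iff2)
  qed
qed

lemma T_bij: "bij (T m s)"
proof (rule o_bij)
  show "(\<lambda>x. (fst x - m, snd x - 2 * cT s (fst x - m))) \<circ> T m s = id"
    by (auto simp: T_def fun_eq_iff)
  show "T m s \<circ> (\<lambda>x. (fst x - m, snd x - 2 * cT s (fst x - m))) = id"
    by (auto simp: T_def fun_eq_iff)
qed

lemma T_aut: "graph_aut Gamma (T m s)"
  using T_bij T_edge by (simp add: graph_aut_def)



definition pa :: "int \<Rightarrow> 10" where "pa n = 3^(nat (n mod 4))"
definition pb :: "int \<Rightarrow> 10" where "pb n = (-1)^(nat (n mod 2))"
definition psi :: "int \<times> 10 \<Rightarrow> int \<times> 10" where
  "psi x = (- fst x, pa (fst x) + pb (fst x) * snd x)"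

lemma pa_succ: "pa (n+1) = 3 * pa n"
proof -
  have "n mod 4 = 0 \<and> (n+1) mod 4 = 1 \<or> n mod 4 = 1 \<and> (n+1) mod 4 = 2 \<or> n mod 4 = 2 \<and> (n+1) mod 4 = 3 \<or> n mod 4 = 3 \<and> (n+1) mod 4 = 0" by presburger
  then show ?thesis unfolding pa_def by (elim disjE conjE) simp_all
qed

lemma pb_succ: "pb (n+1) = - pb n"
proof -
  have "n mod 2 = 0 \<and> (n+1) mod 2 = 1 \<or> n mod 2 = 1 \<and> (n+1) mod 2 = 0" by presburger
  then show ?thesis unfolding pb_def by (elim disjE conjE) simp_all
qed

lemma pa_vals: "pa n = 1 \<or> pa n = 3 \<or> pa n = 7 \<or> pa n = 9"
proof -
  have "n mod 4 = 0 \<or> n mod 4 = 1 \<or> n mod 4 = 2 \<or> n mod 4 = 3" by presburger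
  then show ?thesis unfolding pa_def by (elim disjE) simp_all
qed

lemma pb_vals: "pb n = 1 \<or> pb n = -1"
proof -
  have "n mod 2 = 0 \<or> n mod 2 = 1" by presburger
  then show ?thesis unfolding pb_def by (elim disjE) simp_all
qed

lemma core_psi0: "B = 1 \<or> B = -1 \<Longrightarrow> ((A::10) + B*j' = A + B*j + 1 \<or> A + B*j' = A + B*j - 1) \<longleftrightarrow> (j' = j+1 \<or> j' = j-1)"
  by (elim disjE) (auto simp: algebra_simps)

lemma core_psi1: "A = 1 \<or> A = 3 \<or> A = 7 \<or> A = 9 \<Longrightarrow> B = 1 \<or> B = -1 \<Longrightarrow>
  (\<not> odd10 ((A::10) + B*j) \<and> 3*A + (-B)*j' = 3*(A + B*j)+5) \<longleftrightarrow> (odd10 j \<and> j' = 2*j)"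
proof -
  assume a: "A = 1 \<or> A = 3 \<or> A = 7 \<or> A = 9" and b: "B = 1 \<or> B = -1"
  have "\<forall>j j'::10. (\<not> odd10 ((A::10) + B*j) \<and> 3*A + (-B)*j' = 3*(A + B*j)+5) \<longleftrightarrow> (odd10 j \<and> j' = 2*j)"
    using a b by (elim disjE; simp add: all10 odd10_def)
  then show ?thesis by blast
qed

lemma core_psi2: "A = 1 \<or> A = 3 \<or> A = 7 \<or> A = 9 \<Longrightarrow> B = 1 \<or> B = -1 \<Longrightarrow>
  (odd10 (3*A + (-B)*j) \<and> (A::10) + B*j' = 2*(3*A + (-B)*j)) \<longleftrightarrow> (\<not> odd10 j \<and> j' = 3*j+5)"
proof -
  assume a: "A = 1 \<or> A = 3 \<or> A = 7 \<or> A = 9" and b: "B = 1 \<or> B = -1"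
  have "\<forall>j j'::10. (odd10 (3*A + (-B)*j) \<and> (A::10) + B*j' = 2*(3*A + (-B)*j)) \<longleftrightarrow> (\<not> odd10 j \<and> j' = 3*j+5)"
    using a b by (elim disjE; simp add: all10 odd10_def)
  then show ?thesis by blast
qed



lemma psi_edge: "Gamma (psi x) (psi y) \<longleftrightarrow> Gamma x y"
proof -
  obtain n j n' j' where x: "x = (n,j)" and y: "y = (n',j')" by (cases x, cases y)
  consider "n' = n" | "n' = n+1" | "n' = n - 1" | "n' \<noteq> n \<and> n' \<noteq> n+1 \<and> n' \<noteq> n-1" by blast
  then show ?thesis
  proof cases
    case 1 then show ?thesis using core_psi0[OF pb_vals[of n], of "pa n" j' j] by (simp add: x y psi_def G_same)
  next
    case 2
    have a: "psi x = (-n, pa n + pb n * j)" "psi y = (-n - 1, 3 * pa n + (- pb n) * j')"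
      using 2 by (simp_all add: x y psi_def pa_succ pb_succ)
    show ?thesis unfolding a unfolding x y using 2 core_psi1[OF pa_vals[of n] pb_vals[of n], of j j'] by (simp add: G_down G_up)
  next
    case 3
    then have n: "n = n' + 1" by simp
    have a: "psi x = (-n' - 1, 3 * pa n' + (- pb n') * j)" "psi y = (-n', pa n' + pb n' * j')"
      using n by (simp_all add: x y psi_def pa_succ pb_succ)
    show ?thesis unfolding a unfolding x y using 3 core_psi2[OF pa_vals[of n'] pb_vals[of n'], of j j'] by (simp add: G_down G_up)
  next
    case 4 then show ?thesis by (auto simp: x y psi_def Gamma_iff2)
  qed
qed

lemma pb_sq: "pb n * pb n = 1"
  using pb_vals[of n] by auto

lemma psi_bij: "bij psi"
proof (rule o_bij)
  show "(\<lambda>x. (- fst x, pb (- fst x) * (snd x - pa (- fst x)))) \<circ> psi = id"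
    by (auto simp: psi_def fun_eq_iff algebra_simps pb_sq mult.assoc[symmetric])
  show "psi \<circ> (\<lambda>x. (- fst x, pb (- fst x) * (snd x - pa (- fst x)))) = id"
    by (auto simp: psi_def fun_eq_iff algebra_simps pb_sq mult.assoc[symmetric])
qed

lemma psi_aut: "graph_aut Gamma psi"
  using psi_bij psi_edge by (simp add: graph_aut_def)



lemma aut_comp: "graph_aut E f \<Longrightarrow> graph_aut E g \<Longrightarrow> graph_aut E (f \<circ> g)"
  by (simp add: graph_aut_def bij_comp)

lemma aut_inv: "graph_aut E f \<Longrightarrow> graph_aut E (inv f)"
proof -
  assume a: "graph_aut E f"
  then have b: "bij f" by (simp add: graph_aut_def)
  have "E (inv f x) (inv f y) \<longleftrightarrow> E x y" for x y
    using a b unfolding graph_aut_def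
    by (metis bij_is_surj surj_f_inv_f)
  then show ?thesis using b bij_imp_bij_inv by (simp add: graph_aut_def)
qed

definition V :: "int \<times> 10 \<Rightarrow> int \<times> 10 \<Rightarrow> int \<times> 10" where
  "V y = (if odd10 (snd y) then T (fst y) (3*(snd y - 1)) \<circ> psi else T (fst y) (3 * snd y))"

lemma V_aut: "graph_aut Gamma (V y)"
  by (simp add: V_def T_aut psi_aut aut_comp)

lemma V_00: "V y (0,0) = y"
proof -
  have h: "\<forall>k::10. (if odd10 k then T m (3*(k - 1)) (psi (0,0)) else T m (3 * k) (0,0)) = (m,k)" for m
    unfolding all10 by (simp add: T_def cT_def psi_def pa_def pb_def odd10_def)
  obtain m k where y: "y = (m,k)" by (cases y)
  have "V (m,k) (0,0) = (if odd10 k then T m (3*(k-1)) (psi (0,0)) else T m (3*k) (0,0))" by (simp add: V_def)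
  then show ?thesis using h[of m] y by simp
qed

lemma V_rung: "V y (-1,5) = rung y"
proof -
  have h: "\<forall>k::10. (if odd10 k then T m (3*(k - 1)) (psi (-1,5)) else T m (3 * k) (-1,5)) = rung (m,k)" for m
    unfolding all10 by (simp add: T_def cT_def psi_def pa_def pb_def odd10_def rung_def)
  obtain m k where y: "y = (m,k)" by (cases y)
  have "V (m,k) (-1,5) = (if odd10 k then T m (3*(k-1)) (psi (-1,5)) else T m (3*k) (-1,5))" by (simp add: V_def)
  then show ?thesis using h[of m] y by simp
qed

lemma vt: "vertex_transitive Gamma"
  unfolding vertex_transitive_def
proof (intro allI)
  fix u v
  have "bij (V u)" using V_aut graph_aut_def by blast
  then have "inv (V u) u = (0,0)" using V_00 by (metis bij_is_inj inv_f_f)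
  then show "\<exists>f. graph_aut Gamma f \<and> f u = v"
    by (intro exI[of _ "V v \<circ> inv (V u)"]) (simp add: aut_comp aut_inv V_aut V_00)
qed



definition lp :: "int \<times> 10 \<Rightarrow> int \<times> 10" where "lp x = (fst x, snd x + 1)"
definition lm :: "int \<times> 10 \<Rightarrow> int \<times> 10" where "lm x = (fst x, snd x - 1)"

lemma neg1: "(-1::10) = 9" by simp

lemma Gamma_nb: "Gamma x y \<longleftrightarrow> y = lp x \<or> y = lm x \<or> y = rung x"
  by (simp add: Gamma_iff lp_def lm_def)

lemma fst_rung: "fst (rung x) = fst x + 1 \<or> fst (rung x) = fst x - 1"
  by (simp add: rung_def)

lemma lp_lm: "lp x \<noteq> lm x"
proof -
  have "\<forall>k::10. k + 1 \<noteq> k - 1" unfolding all10 by simp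
  then show ?thesis by (simp add: lp_def lm_def)
qed

lemma lp_rung: "lp x \<noteq> rung x"
proof
  assume h: "lp x = rung x"
  have "fst (lp x) = fst x" by (simp add: lp_def)
  then show False using h fst_rung[of x] by auto
qed
lemma lm_rung: "lm x \<noteq> rung x"
proof
  assume h: "lm x = rung x"
  have "fst (lm x) = fst x" by (simp add: lm_def)
  then show False using h fst_rung[of x] by auto
qed
lemma x_rung: "x \<noteq> rung x"
  using fst_rung[of x] by (metis add.right_neutral diff_0_right diff_add_cancel zero_neq_one one_neq_zero add_diff_cancel_left')

lemma rung_rung: "rung (rung x) = x"
proof -
  have "\<forall>k::10. rung (rung (n,k)) = (n,k)" for n unfolding all10 by (simp add: rung_def odd10_def)
  then show ?thesis by (cases x) auto
qed

lemma lp_lm_inv: "lm (lp x) = x" "lp (lm x) = x" by (simp_all add: lp_def lm_def)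

lemma Gamma_sym: "Gamma x y \<Longrightarrow> Gamma y x"
  unfolding Gamma_nb using lp_lm_inv rung_rung by metis

lemma Gamma_irr: "\<not> Gamma x x"
  unfolding Gamma_nb using x_rung by (simp add: lp_def lm_def prod_eq_iff)

lemma simple: "simple_graph Gamma"
  using Gamma_sym Gamma_irr by (simp add: simple_graph_def)

lemma cubic: "cubic Gamma"
  unfolding cubic_def
proof
  fix v
  have "{w. Gamma v w} = {lp v, lm v, rung v}" by (auto simp: Gamma_nb)
  then show "card {w. Gamma v w} = 3" using lp_lm lp_rung lm_rung by simp
qed

definition C8 :: "int \<times> 10 \<Rightarrow> int \<times> 10 \<Rightarrow> int \<times> 10 \<Rightarrow>
   (int \<times> 10) \<times> (int \<times> 10) \<times> (int \<times> 10) \<times> (int \<times> 10) \<times> (int \<times> 10) \<Rightarrow> bool" where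
  "C8 a b c w = (case w of (w1,w2,w3,w4,w5) \<Rightarrow> distinct [a,b,c,w1,w2,w3,w4,w5] \<and>
     Gamma a b \<and> Gamma b c \<and> Gamma c w1 \<and> Gamma w1 w2 \<and> Gamma w2 w3 \<and> Gamma w3 w4 \<and> Gamma w4 w5 \<and> Gamma w5 a)"

definition map5 :: "('a \<Rightarrow> 'b) \<Rightarrow> 'a \<times> 'a \<times> 'a \<times> 'a \<times> 'a \<Rightarrow> 'b \<times> 'b \<times> 'b \<times> 'b \<times> 'b" where
  "map5 f w = (case w of (w1,w2,w3,w4,w5) \<Rightarrow> (f w1, f w2, f w3, f w4, f w5))"

definition P3 :: "int \<times> 10 \<Rightarrow> int \<times> 10 \<Rightarrow> int \<times> 10 \<Rightarrow> bool" where
  "P3 a b c \<longleftrightarrow> (\<exists>w w' w''. C8 a b c w \<and> C8 a b c w' \<and> C8 a b c w'' \<and> w \<noteq> w' \<and> w \<noteq> w'' \<and> w' \<noteq> w'')"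

lemma C8_map: assumes f: "graph_aut Gamma f" and c: "C8 a b c w"
  shows "C8 (f a) (f b) (f c) (map5 f w)"
proof -
  have i: "inj f" and e: "\<And>x y. Gamma (f x) (f y) \<longleftrightarrow> Gamma x y" using f by (auto simp: graph_aut_def bij_def)
  obtain w1 w2 w3 w4 w5 where w: "w = (w1,w2,w3,w4,w5)" by (cases w) auto
  have d: "distinct [a,b,c,w1,w2,w3,w4,w5]" using c by (simp add: C8_def w)
  have "distinct (map f [a,b,c,w1,w2,w3,w4,w5])" using d inj_on_subset[OF i subset_UNIV]
    by (simp only: distinct_map)
  then show ?thesis using c by (simp add: C8_def map5_def w e)
qed

lemma map5_inj: "inj f \<Longrightarrow> map5 f w = map5 f w' \<Longrightarrow> w = w'"
  by (cases w; cases w') (auto simp: map5_def inj_eq)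

lemma P3_map: assumes f: "graph_aut Gamma f" and p: "P3 a b c" shows "P3 (f a) (f b) (f c)"
proof -
  have i: "inj f" using f by (auto simp: graph_aut_def bij_def)
  obtain w w' w'' where "C8 a b c w" "C8 a b c w'" "C8 a b c w''" "w \<noteq> w'" "w \<noteq> w''" "w' \<noteq> w''"
    using p unfolding P3_def by blast
  then show ?thesis unfolding P3_def using C8_map[OF f] map5_inj[OF i]
    by (metis (no_types, lifting))
qed

lemma base_pos1: "P3 (0,1) (0,0) (0,9)"
  unfolding P3_def
  apply (rule exI[of _ "((0,8),(0,7),(1,4),(1,3),(1,2))"])
  apply (rule exI[of _ "((0,8),(-1,9),(-1,0),(-1,1),(0,2))"])
  apply (rule exI[of _ "((1,8),(1,9),(1,0),(1,1),(1,2))"])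
  by (simp add: C8_def Gamma_iff rung_def odd10_def)

lemma base_pos2: "P3 (0,9) (0,0) (0,1)"
  unfolding P3_def
  apply (rule exI[of _ "((1,2),(1,3),(1,4),(0,7),(0,8))"])
  apply (rule exI[of _ "((0,2),(-1,1),(-1,0),(-1,9),(0,8))"])
  apply (rule exI[of _ "((1,2),(1,1),(1,0),(1,9),(1,8))"])
  by (simp add: C8_def Gamma_iff rung_def odd10_def)


definition nbl :: "int \<times> 10 \<Rightarrow> (int \<times> 10) list" where "nbl x = [lp x, lm x, rung x]"

lemma Gamma_nbl: "Gamma x y \<longleftrightarrow> y \<in> set (nbl x)"
  by (auto simp: nbl_def Gamma_nb)

lemma Gamma_nbE: "Gamma x y \<Longrightarrow> (y = lp x \<Longrightarrow> P) \<Longrightarrow> (y = lm x \<Longrightarrow> P) \<Longrightarrow> (y = rung x \<Longrightarrow> P) \<Longrightarrow> P"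
  unfolding Gamma_nb by blast

lemmas evs = lp_def lm_def rung_def odd10_def

lemma enum1: "Gamma (0,1) w1 \<Longrightarrow> Gamma w1 w2 \<Longrightarrow> Gamma w2 w3 \<Longrightarrow> Gamma w3 w4 \<Longrightarrow> Gamma w4 w5 \<Longrightarrow> Gamma (-1,5) w5 \<Longrightarrow>
  distinct [(-1,5),(0,0),(0,1),w1,w2,w3,w4,w5] \<Longrightarrow>
   (w1,w2,w3,w4,w5) \<in> {((0,2),(0,3),(0,4),(-1,7),(-1,6)), ((0,2),(-1,1),(-1,2),(-1,3),(-1,4))}"
  apply (erule Gamma_nbE[where y=w1]; simp add: evs; erule Gamma_nbE[where x="(-1,5)" and y=w5]; simp add: evs;
     erule Gamma_nbE[where y=w2]; simp add: evs; erule Gamma_nbE[where y=w3]; simp add: evs;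
     erule Gamma_nbE[where y=w4]; simp add: evs Gamma_nb)
  done

lemma enum2: "Gamma (0,9) w1 \<Longrightarrow> Gamma w1 w2 \<Longrightarrow> Gamma w2 w3 \<Longrightarrow> Gamma w3 w4 \<Longrightarrow> Gamma w4 w5 \<Longrightarrow> Gamma (-1,5) w5 \<Longrightarrow>
  distinct [(-1,5),(0,0),(0,9),w1,w2,w3,w4,w5] \<Longrightarrow>
   (w1,w2,w3,w4,w5) \<in> {((0,8),(0,7),(0,6),(-1,3),(-1,4)), ((0,8),(-1,9),(-1,8),(-1,7),(-1,6))}"
  apply (erule Gamma_nbE[where y=w1]; simp add: evs; erule Gamma_nbE[where x="(-1,5)" and y=w5]; simp add: evs;
     erule Gamma_nbE[where y=w2]; simp add: evs; erule Gamma_nbE[where y=w3]; simp add: evs;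
     erule Gamma_nbE[where y=w4]; simp add: evs Gamma_nb)
  done



lemma C8_enum1: assumes "C8 (-1,5) (0,0) (0,1) w"
  shows "w \<in> {((0,2),(0,3),(0,4),(-1,7),(-1,6)), ((0,2),(-1,1),(-1,2),(-1,3),(-1,4))}"
proof -
  obtain w1 w2 w3 w4 w5 where w: "w = (w1,w2,w3,w4,w5)" by (cases w) auto
  show ?thesis unfolding w
    by (rule enum1) (use assms Gamma_sym in \<open>auto simp: C8_def w\<close>)
qed

lemma C8_enum2: assumes "C8 (-1,5) (0,0) (0,9) w"
  shows "w \<in> {((0,8),(0,7),(0,6),(-1,3),(-1,4)), ((0,8),(-1,9),(-1,8),(-1,7),(-1,6))}"
proof -
  obtain w1 w2 w3 w4 w5 where w: "w = (w1,w2,w3,w4,w5)" by (cases w) auto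
  show ?thesis unfolding w
    by (rule enum2) (use assms Gamma_sym in \<open>auto simp: C8_def w\<close>)
qed

lemma base_neg1: "\<not> P3 (-1,5) (0,0) (0,1)"
  unfolding P3_def using C8_enum1 by blast

lemma base_neg2: "\<not> P3 (-1,5) (0,0) (0,9)"
  unfolding P3_def using C8_enum2 by blast

lemma aut_inj: "graph_aut Gamma f \<Longrightarrow> inj f"
  by (simp add: graph_aut_def bij_def)

lemma aut_edge: "graph_aut Gamma f \<Longrightarrow> Gamma (f x) (f y) \<longleftrightarrow> Gamma x y"
  unfolding graph_aut_def by blast

lemma P3_layer: "P3 (lp y) y (lm y) \<and> P3 (lm y) y (lp y)"
proof -
  let ?f = "V y"
  have f: "graph_aut Gamma ?f" by (rule V_aut)
  have i: "inj ?f" using aut_inj[OF f] .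
  have e01: "Gamma (0,0) (0,1)" "Gamma (0,0) (0,9)" by (simp_all add: Gamma_nb evs)
  have a: "Gamma y (?f (0,1))" "Gamma y (?f (0,9))"
    using aut_edge[OF f, of "(0,0)"] e01 V_00[of y] by simp_all
  have "?f (0,1) \<noteq> ?f (-1,5)" "?f (0,9) \<noteq> ?f (-1,5)" "?f (0,1) \<noteq> ?f (0,9)"
    using i by (simp_all add: inj_eq)
  then have b: "?f (0,1) \<noteq> rung y" "?f (0,9) \<noteq> rung y" "?f (0,1) \<noteq> ?f (0,9)" using V_rung by simp_all
  have c: "(?f (0,1) = lp y \<and> ?f (0,9) = lm y) \<or> (?f (0,1) = lm y \<and> ?f (0,9) = lp y)"
    using a b unfolding Gamma_nb by metis
  have "P3 (?f (0,1)) (?f (0,0)) (?f (0,9))" "P3 (?f (0,9)) (?f (0,0)) (?f (0,1))"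
    using P3_map[OF f base_pos1] P3_map[OF f base_pos2] by simp_all
  then show ?thesis using c V_00[of y] by auto
qed

lemma inv_V: "inv (V y) y = (0,0)" "inv (V y) (rung y) = (-1,5)"
  using aut_inj[OF V_aut] V_00 V_rung by (metis inv_f_f)+

lemma P3_rung_neg: assumes l: "l = lp y \<or> l = lm y" shows "\<not> P3 (rung y) y l"
proof
  assume p: "P3 (rung y) y l"
  let ?g = "inv (V y)"
  have g: "graph_aut Gamma ?g" by (rule aut_inv[OF V_aut])
  have q: "P3 (-1,5) (0,0) (?g l)" using P3_map[OF g p] inv_V by simp
  have "Gamma y l" using l by (auto simp: Gamma_nb)
  then have "Gamma (0,0) (?g l)" using aut_edge[OF g, of y l] inv_V by simp
  moreover have "?g l \<noteq> (-1,5)"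
  proof
    assume "?g l = (-1,5)"
    then have "?g l = ?g (rung y)" using inv_V by simp
    then have "l = rung y" using aut_inj[OF g] by (simp add: inj_eq)
    then show False using l lp_rung lm_rung by metis
  qed
  ultimately have "?g l = (0,1) \<or> ?g l = (0,9)" by (auto simp: Gamma_nb evs)
  then show False using q base_neg1 base_neg2 by auto
qed

lemma aut_rung: assumes f: "graph_aut Gamma f" shows "f (rung y) = rung (f y)"
proof (rule ccontr)
  assume ne: "f (rung y) \<noteq> rung (f y)"
  have s: "surj f" using f by (simp add: graph_aut_def bij_def)
  then obtain z where z: "f z = rung (f y)" by (metis surjD)
  have "Gamma (f y) (f z)" using z by (simp add: Gamma_nb)
  then have "Gamma y z" using aut_edge[OF f] by simp
  moreover have "z \<noteq> rung y" using ne z by auto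
  ultimately have zz: "z = lp y \<or> z = lm y" by (auto simp: Gamma_nb)
  have i: "inj f" using aut_inj[OF f] .
  show False
  proof (cases "z = lp y")
    case True
    have p: "P3 (rung (f y)) (f y) (f (lm y))" using P3_map[OF f, of "lp y" y "lm y"] P3_layer True z by simp
    have "Gamma (f y) (f (lm y))" using aut_edge[OF f] by (simp add: Gamma_nb)
    moreover have "f (lm y) \<noteq> rung (f y)" using z True i lp_lm by (metis inj_eq)
    moreover have "f (lm y) \<noteq> f (rung y)" using i lm_rung by (simp add: inj_eq)
    ultimately have "f (lm y) = lp (f y) \<or> f (lm y) = lm (f y)" by (auto simp: Gamma_nb)
    then show False using p P3_rung_neg by blast
  next
    case False
    then have F: "z = lm y" using zz by simp
    have p: "P3 (rung (f y)) (f y) (f (lp y))" using P3_map[OF f, of "lm y" y "lp y"] P3_layer F z by simp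
    have "Gamma (f y) (f (lp y))" using aut_edge[OF f] by (simp add: Gamma_nb)
    moreover have "f (lp y) \<noteq> rung (f y)" using z F i lp_lm by (metis inj_eq)
    ultimately have "f (lp y) = lp (f y) \<or> f (lp y) = lm (f y)" by (auto simp: Gamma_nb)
    then show False using p P3_rung_neg by blast
  qed
qed

lemma aut_layer: assumes f: "graph_aut Gamma f" and z: "z = lp y \<or> z = lm y"
  shows "f z = lp (f y) \<or> f z = lm (f y)"
proof -
  have "Gamma y z" using z by (auto simp: Gamma_nb)
  then have "Gamma (f y) (f z)" using aut_edge[OF f] by simp
  moreover have "f z \<noteq> f (rung y)" using aut_inj[OF f] z lp_rung lm_rung by (metis inj_eq)
  ultimately show ?thesis using aut_rung[OF f] by (auto simp: Gamma_nb)
qed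



lemma not_cayley: "\<not> cayley_graph Gamma"
proof
  assume "cayley_graph Gamma"
  then obtain H where sub: "aut_subgroup Gamma H" and reg: "acts_regularly H"
    unfolding cayley_graph_def by blast
  obtain g where gH: "g \<in> H" and g0: "g (0,0) = (-1,5)"
    using reg unfolding acts_regularly_def by blast
  have ga: "graph_aut Gamma g" using sub gH by (simp add: aut_subgroup_def)
  have i: "inj g" using aut_inj[OF ga] .
  have r00: "rung (0,0) = (-1,5)" "rung (-1,5) = (0,0)" by (simp_all add: evs)
  have g5: "g (-1,5) = (0,0)" using aut_rung[OF ga, of "(0,0)"] r00 g0 by simp
  have ggH: "g \<circ> g \<in> H" using sub gH by (simp add: aut_subgroup_def)
  have idH: "id \<in> H" using sub by (simp add: aut_subgroup_def)
  have "\<exists>!h. h \<in> H \<and> h (0,0) = (0,0)" using reg unfolding acts_regularly_def by blast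
  then have "g \<circ> g = id" using ggH idH g0 g5 by auto
  then have gg: "\<And>x. g (g x) = x" by (metis comp_apply id_apply)
  have step: "\<And>y z. z = lp y \<or> z = lm y \<Longrightarrow> g z = lp (g y) \<or> g z = lm (g y)"
    using aut_layer[OF ga] by blast
  have ne: "\<And>x y. x \<noteq> y \<Longrightarrow> g x \<noteq> g y" using i by (simp add: inj_eq)
  have g1: "g (0,1) = (-1,6) \<or> g (0,1) = (-1,4)"
    using step[of "(0,1)" "(0,0)"] g0 by (simp add: evs)
  then show False
  proof
    assume A: "g (0,1) = (-1,6)"
    have a2: "g (0,2) = (-1,7)"
      using step[of "(0,2)" "(0,1)"] A ne[of "(0,2)" "(0,0)"] g0 by (simp add: evs)
    have a3: "g (0,3) = (-1,8)"
      using step[of "(0,3)" "(0,2)"] a2 ne[of "(0,3)" "(0,1)"] A by (simp add: evs)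
    have a4: "g (0,4) = (-1,9)"
      using step[of "(0,4)" "(0,3)"] a3 ne[of "(0,4)" "(0,2)"] a2 by (simp add: evs)
    have "g (-1,7) = (0,2)" using gg[of "(0,2)"] a2 by simp
    moreover have "g (rung (0,4)) = rung (g (0,4))" by (rule aut_rung[OF ga])
    moreover have "rung (0,4) = (-1,7)" "rung (-1,9) = (0,8)" by (simp_all add: evs)
    ultimately show False using a4 by simp
  next
    assume B: "g (0,1) = (-1,4)"
    have a2: "g (0,2) = (-1,3)"
      using step[of "(0,2)" "(0,1)"] B ne[of "(0,2)" "(0,0)"] g0 by (simp add: evs)
    have a3: "g (0,3) = (-1,2)"
      using step[of "(0,3)" "(0,2)"] a2 ne[of "(0,3)" "(0,1)"] B by (simp add: evs)
    have a4: "g (0,4) = (-1,1)"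
      using step[of "(0,4)" "(0,3)"] a3 ne[of "(0,4)" "(0,2)"] a2 by (simp add: evs)
    have a9: "g (0,9) = (-1,6)"
      using step[of "(0,9)" "(0,0)"] g0 ne[of "(0,9)" "(0,1)"] B by (simp add: evs)
    have a8: "g (0,8) = (-1,7)"
      using step[of "(0,8)" "(0,9)"] a9 ne[of "(0,8)" "(0,0)"] g0 by (simp add: evs)
    have "g (-1,7) = (0,8)" using gg[of "(0,8)"] a8 by simp
    moreover have "g (rung (0,4)) = rung (g (0,4))" by (rule aut_rung[OF ga])
    moreover have "rung (0,4) = (-1,7)" "rung (-1,1) = (0,2)" by (simp_all add: evs)
    ultimately show False using a4 by simp
  qed
qed



definition RS :: "(int \<times> 10) set \<Rightarrow> int \<times> 10 \<Rightarrow> int \<times> 10 \<Rightarrow> bool" where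
  "RS S = (\<lambda>x y. Gamma x y \<and> x \<notin> S \<and> y \<notin> S)"

lemma fst_adj: "Gamma x y \<Longrightarrow> fst y = fst x \<or> fst y = fst x + 1 \<or> fst y = fst x - 1"
  using fst_rung[of x] by (auto simp: Gamma_nb lp_def lm_def)

lemma RS_sym: "(RS S)\<^sup>*\<^sup>* x y \<Longrightarrow> (RS S)\<^sup>*\<^sup>* y x"
proof -
  have "symp (RS S)" unfolding RS_def by (auto intro: sympI Gamma_sym)
  then have "symp (RS S)\<^sup>*\<^sup>*" by (rule symp_rtranclp)
  then show "(RS S)\<^sup>*\<^sup>* x y \<Longrightarrow> (RS S)\<^sup>*\<^sup>* y x" by (rule sympD)
qed

lemma of_nat_surj10: "\<exists>i. (d::10) = of_nat i"
proof -
  obtain z where "d = of_int z" "0 \<le> z" by (cases d) auto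
  then show ?thesis by (intro exI[of _ "nat z"]) simp
qed

lemma walk_layer_aux: assumes free: "\<forall>k. (n,k) \<notin> S"
  shows "(RS S)\<^sup>*\<^sup>* (n,k) (n, k + of_nat i)"
proof (induction i)
  case 0 then show ?case by simp
next
  case (Suc i)
  have "RS S (n, k + of_nat i) (n, k + of_nat (Suc i))"
    using free by (simp add: RS_def Gamma_nb lp_def algebra_simps)
  then show ?case using Suc by (meson rtranclp.rtrancl_into_rtrancl)
qed

lemma walk_layer: assumes free: "\<forall>k. (n,k) \<notin> S"
  shows "(RS S)\<^sup>*\<^sup>* (n,k) (n, k')"
proof -
  obtain i where "k' - k = of_nat i" using of_nat_surj10 by blast
  then have "k' = k + of_nat i" by (simp add: algebra_simps)
  then show ?thesis using walk_layer_aux[OF free] by simp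
qed

lemma walk_up: assumes free: "\<forall>m k. n \<le> m \<and> m \<le> n + int d \<longrightarrow> (m,k) \<notin> S"
  shows "(RS S)\<^sup>*\<^sup>* (n,k) (n + int d, k')"
  using free
proof (induction d arbitrary: k')
  case 0 then show ?case using walk_layer[of n S k k'] by simp
next
  case (Suc d)
  have f1: "\<forall>m k. n \<le> m \<and> m \<le> n + int d \<longrightarrow> (m,k) \<notin> S" using Suc.prems by auto
  have a: "(RS S)\<^sup>*\<^sup>* (n,k) (n + int d, 1)" using Suc.IH f1 by blast
  have "Gamma (n + int d, 1) (n + int d + 1, 2)" by (simp add: Gamma_nb evs)
  moreover have "n + int (Suc d) = n + int d + 1" by simp
  ultimately have "Gamma (n + int d, 1) (n + int (Suc d), 2)" by metis
  then have b: "RS S (n + int d, 1) (n + int (Suc d), 2)" using Suc.prems by (simp add: RS_def)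
  have c: "(RS S)\<^sup>*\<^sup>* (n + int (Suc d), 2) (n + int (Suc d), k')"
    using walk_layer[of "n + int (Suc d)" S] Suc.prems by simp
  show ?case using a b c by (meson rtranclp.rtrancl_into_rtrancl rtranclp_trans)
qed

lemma walk: assumes "n \<le> n'" and free: "\<forall>m k. n \<le> m \<and> m \<le> n' \<longrightarrow> (m,k) \<notin> S"
  shows "(RS S)\<^sup>*\<^sup>* (n,k) (n', k')"
proof -
  have "n' = n + int (nat (n' - n))" using assms by simp
  then show ?thesis using walk_up[of n "nat (n'-n)" S k k'] free by (metis)
qed

lemma walk_any: assumes free: "\<forall>m k. min n n' \<le> m \<and> m \<le> max n n' \<longrightarrow> (m,k) \<notin> S"
  shows "(RS S)\<^sup>*\<^sup>* (n,k) (n', k')"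
proof (cases "n \<le> n'")
  case True then show ?thesis using walk[of n n' S k k'] free by auto
next
  case False
  then have "(RS S)\<^sup>*\<^sup>* (n',k') (n, k)" using walk[of n' n S k' k] free by auto
  then show ?thesis by (rule RS_sym)
qed

lemma connected: "graph_connected Gamma"
  unfolding graph_connected_def
proof (intro allI)
  fix u v :: "int \<times> 10"
  have "(RS {})\<^sup>*\<^sup>* u v" using walk_any[of "fst u" "fst v" "{}" "snd u" "snd v"] by simp
  moreover have "RS {} \<le> Gamma" by (auto simp: RS_def)
  ultimately show "Gamma\<^sup>*\<^sup>* u v" using rtranclp_mono by blast
qed

lemma comp_same: "(RS S)\<^sup>*\<^sup>* u x \<Longrightarrow> {v. (RS S)\<^sup>*\<^sup>* u v} = {v. (RS S)\<^sup>*\<^sup>* x v}"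
  using RS_sym by (meson rtranclp_trans)

lemma inf_range: "inj (f::nat \<Rightarrow> int \<times> 10) \<Longrightarrow> range f \<subseteq> A \<Longrightarrow> infinite A"
  using finite_imageD finite_subset infinite_UNIV_nat by blast

lemma walk_high: assumes b: "\<forall>x\<in>S. \<bar>fst x\<bar> \<le> N" and "fst x > N" "fst y > N"
  shows "(RS S)\<^sup>*\<^sup>* x y"
proof -
  have "\<forall>m k. min (fst x) (fst y) \<le> m \<and> m \<le> max (fst x) (fst y) \<longrightarrow> (m,k) \<notin> S"
    using assms by force
  then show ?thesis using walk_any[of "fst x" "fst y" S "snd x" "snd y"] by simp
qed

lemma walk_low: assumes b: "\<forall>x\<in>S. \<bar>fst x\<bar> \<le> N" and "fst x < -N" "fst y < -N"
  shows "(RS S)\<^sup>*\<^sup>* x y"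
proof -
  have "\<forall>m k. min (fst x) (fst y) \<le> m \<and> m \<le> max (fst x) (fst y) \<longrightarrow> (m,k) \<notin> S"
    using assms by force
  then show ?thesis using walk_any[of "fst x" "fst y" S "snd x" "snd y"] by simp
qed

lemma comps_eq: "comps_minus Gamma S = {{v. (RS S)\<^sup>*\<^sup>* u v} | u. u \<notin> S}"
  by (simp add: comps_minus_def RS_def)

lemma inf_sub: assumes b: "\<forall>x\<in>S. \<bar>fst x\<bar> \<le> N"
  shows "inf_comps_minus Gamma S \<subseteq> {{v. (RS S)\<^sup>*\<^sup>* (N+1,0) v}, {v. (RS S)\<^sup>*\<^sup>* (-N-1,0) v}}"
proof
  fix C assume "C \<in> inf_comps_minus Gamma S"
  then obtain u where C: "C = {v. (RS S)\<^sup>*\<^sup>* u v}" and inf: "infinite C"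
    unfolding inf_comps_minus_def comps_eq by blast
  have "finite ({-N..N} \<times> (UNIV :: 10 set))" by simp
  then have "\<not> C \<subseteq> {-N..N} \<times> (UNIV :: 10 set)" using inf finite_subset by blast
  then obtain x where x: "x \<in> C" "fst x > N \<or> fst x < -N" by force
  have ux: "(RS S)\<^sup>*\<^sup>* u x" using x C by simp
  show "C \<in> {{v. (RS S)\<^sup>*\<^sup>* (N+1,0) v}, {v. (RS S)\<^sup>*\<^sup>* (-N-1,0) v}}"
  proof (cases "fst x > N")
    case True
    then have "(RS S)\<^sup>*\<^sup>* x (N+1,0)" using walk_high[OF b] by simp
    then have "(RS S)\<^sup>*\<^sup>* u (N+1,0)" using ux by (meson rtranclp_trans)
    then show ?thesis using C comp_same by blast
  next
    case False
    then have "fst x < -N" using x by simp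
    then have "(RS S)\<^sup>*\<^sup>* x (-N-1,0)" using walk_low[OF b] by simp
    then have "(RS S)\<^sup>*\<^sup>* u (-N-1,0)" using ux by (meson rtranclp_trans)
    then show ?thesis using C comp_same by blast
  qed
qed

lemma bound_ex: "finite S \<Longrightarrow> \<exists>N. \<forall>x\<in>S. \<bar>fst x\<bar> \<le> (N::int)"
proof -
  assume "finite S"
  then have "finite ((\<lambda>x. \<bar>fst x\<bar>) ` S)" by simp
  then show ?thesis by (meson Max_ge finite_imageI image_eqI)
qed

lemma card_le2: "card {A, B} \<le> 2" by (simp add: card_insert_if)

lemma part2: "finite S \<Longrightarrow> finite (inf_comps_minus Gamma S) \<and> card (inf_comps_minus Gamma S) \<le> 2"
proof -
  assume "finite S"
  then obtain N where b: "\<forall>x\<in>S. \<bar>fst x\<bar> \<le> N" using bound_ex by blast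
  have s: "inf_comps_minus Gamma S \<subseteq> {{v. (RS S)\<^sup>*\<^sup>* (N+1,0) v}, {v. (RS S)\<^sup>*\<^sup>* (-N-1,0) v}}"
    using inf_sub[OF b] .
  then have "finite (inf_comps_minus Gamma S)" using finite_subset by blast
  moreover have "card (inf_comps_minus Gamma S) \<le> 2"
    using card_mono[OF _ s] card_le2 by (meson finite.emptyI finite.insertI order_trans)
  ultimately show ?thesis by blast
qed

lemma part3: "\<exists>S. finite S \<and> card (inf_comps_minus Gamma S) = 2"
proof -
  define S0 :: "(int \<times> 10) set" where "S0 = {0} \<times> UNIV"
  have fin: "finite S0" by (simp add: S0_def)
  have b: "\<forall>x\<in>S0. \<bar>fst x\<bar> \<le> 0" by (simp add: S0_def)
  define A where "A = {v. (RS S0)\<^sup>*\<^sup>* (0+1,0) v}"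
  define B where "B = {v. (RS S0)\<^sup>*\<^sup>* (-0-1,0) v}"
  have sub: "inf_comps_minus Gamma S0 \<subseteq> {A, B}" using inf_sub[OF b] by (simp add: A_def B_def)
  have infA: "infinite A"
  proof (rule inf_range)
    show "inj (\<lambda>i::nat. (1 + int i, 0::10))" by (auto simp: inj_def)
    show "range (\<lambda>i::nat. (1 + int i, 0::10)) \<subseteq> A"
      unfolding A_def using walk_high[OF b] by auto
  qed
  have infB: "infinite B"
  proof (rule inf_range)
    show "inj (\<lambda>i::nat. (-1 - int i, 0::10))" by (auto simp: inj_def)
    show "range (\<lambda>i::nat. (-1 - int i, 0::10)) \<subseteq> B"
      unfolding B_def using walk_low[OF b] by auto
  qed
  have pos: "(RS S0)\<^sup>*\<^sup>* (1,0) v \<Longrightarrow> fst v > 0" for v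
  proof (induction rule: rtranclp_induct)
    case base then show ?case by simp
  next
    case (step y z)
    then have "z \<notin> S0" "Gamma y z" by (simp_all add: RS_def)
    then have "fst z \<noteq> 0" "fst z = fst y \<or> fst z = fst y + 1 \<or> fst z = fst y - 1"
      using fst_adj by (auto simp: S0_def mem_Times_iff)
    then show ?case using step.IH by auto
  qed
  have "(-1,0) \<in> B" by (simp add: B_def)
  moreover have "(-1,0) \<notin> A" using pos[of "(-1,0)"] by (auto simp: A_def)
  ultimately have AB: "A \<noteq> B" by blast
  have "A \<in> inf_comps_minus Gamma S0" using infA
    unfolding inf_comps_minus_def comps_eq A_def by (auto simp: S0_def)
  moreover have "B \<in> inf_comps_minus Gamma S0" using infB
    unfolding inf_comps_minus_def comps_eq B_def by (auto simp: S0_def)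
  ultimately have "inf_comps_minus Gamma S0 = {A, B}" using sub by blast
  then have "card (inf_comps_minus Gamma S0) = 2" using AB by simp
  then show ?thesis using fin by blast
qed

lemma two_ended_Gamma: "two_ended Gamma"
  unfolding two_ended_def using connected part2 part3 by blast


theorem theorem1p3:
  shows "simple_graph Gamma \<and> cubic Gamma \<and> two_ended Gamma \<and>
         vertex_transitive Gamma \<and> \<not> cayley_graph Gamma"
  using simple cubic two_ended_Gamma vt not_cayley by blast

end
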